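(* Let $a\in(0,1]$ and $\theta\in C^1((0,\infty))$ with $\sup_{r>0}|r\theta'(r)|<\infty$. Then for all $u\in H_0^1(\Omega)$, $$\int_\Omega|\nabla u(x)|^2\,dx\ \ge\ \frac1{4a^2}\int_\Omega\frac{|u(x)|^2}{|x|^2}\,dx.$$
   Context: Curved wedge $\Omega:=\{(r\cos[\varphi+\theta(r)],r\sin[\varphi+\theta(r)]):r>0,\ \varphi\in(0,2\pi a)\}\subset\mathbb{R}^2$. *)

theory Defs
  imports "HOL-Analysis.Analysis"
begin

definition curved_wedge :: "real \<Rightarrow> (real \<Rightarrow> real) \<Rightarrow> (real \<times> real) set" where
  "curved_wedge a \<theta> =
     {(r * cos (\<phi> + \<theta> r), r * sin (\<phi> + \<theta> r)) | r \<phi>. r > 0 \<and> \<phi> \<in> {0<..<2 * pi * a}}"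

text \<open>C-infinity functions on the plane: D i j is the partial derivative
  of order i in the first and j in the second variable; all of them exist and
  are (Frechet) differentiable everywhere.\<close>
definition smooth2 :: "(real \<times> real \<Rightarrow> real) \<Rightarrow> bool" where
  "smooth2 f \<longleftrightarrow> (\<exists>D :: nat \<Rightarrow> nat \<Rightarrow> (real \<times> real \<Rightarrow> real).
      D 0 0 = f \<and>
      (\<forall>i j x. (D i j has_derivative
                 (\<lambda>h. fst h * D (Suc i) j x + snd h * D i (Suc j) x)) (at x)))"

definition test_fun :: "(real \<times> real) set \<Rightarrow> (real \<times> real \<Rightarrow> real) \<Rightarrow> bool" where
  "test_fun \<Omega> f \<longleftrightarrow> smooth2 f \<and> compact (closure {x. f x \<noteq> 0})
                       \<and> closure {x. f x \<noteq> 0} \<subseteq> \<Omega>"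

text \<open>u belongs to H_0^1(Omega) (closure of C_c^infinity(Omega) in the H^1 norm)
  and g is its (weak) gradient: there are test functions phi_n with
  phi_n \<rightarrow> u and grad phi_n \<rightarrow> g in L^2(R^2).\<close>
definition H01_grad :: "(real \<times> real) set \<Rightarrow> (real \<times> real \<Rightarrow> real)
                          \<Rightarrow> (real \<times> real \<Rightarrow> real \<times> real) \<Rightarrow> bool" where
  "H01_grad \<Omega> u g \<longleftrightarrow>
     u \<in> borel_measurable lborel \<and> g \<in> borel_measurable lborel \<and>
     (\<exists>\<phi> :: nat \<Rightarrow> real \<times> real \<Rightarrow> real. \<exists>G :: nat \<Rightarrow> real \<times> real \<Rightarrow> real \<times> real.
        (\<forall>n. test_fun \<Omega> (\<phi> n)) \<and>
        (\<forall>n x. GDERIV (\<phi> n) x :> G n x) \<and>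
        (\<lambda>n. \<integral>\<^sup>+ x. ennreal ((\<phi> n x - u x)\<^sup>2) \<partial>lborel) \<longlonglongrightarrow> 0 \<and>
        (\<lambda>n. \<integral>\<^sup>+ x. ennreal ((norm (G n x - g x))\<^sup>2) \<partial>lborel) \<longlonglongrightarrow> 0)"

end

theory Submission
  imports Defs "HOL-Analysis.Analysis"
begin

definition cz :: "real \<times> real \<Rightarrow> complex" where
  "cz x = complex_of_real (fst x) + \<i> * complex_of_real (snd x)"
definition zeta :: "(real \<Rightarrow> real) \<Rightarrow> real \<times> real \<Rightarrow> complex" where
  "zeta \<theta> x = - cz x * (complex_of_real (cos (\<theta> (norm x))) - \<i> * complex_of_real (sin (\<theta> (norm x))))"
definition ang :: "(real \<Rightarrow> real) \<Rightarrow> real \<times> real \<Rightarrow> real" where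
  "ang \<theta> x = pi + Im (Ln (zeta \<theta> x))"

lemma sq_norm: "(norm x)^2 = fst x ^ 2 + snd x ^ 2" for x :: "real \<times> real"
  by (cases x) (simp add: norm_Pair)

lemma cz_deriv [derivative_intros]: "(cz has_derivative cz) (at x within S)"
  unfolding cz_def[abs_def]
  by (rule derivative_eq_intros refl)+ simp

lemma thn_deriv:
  assumes th: "(\<theta> has_real_derivative th') (at (norm x))" and x0: "x \<noteq> 0"
  shows "((\<lambda>x. \<theta> (norm x)) has_derivative (\<lambda>h. th' * (inner x h / norm x))) (at x)"
proof -
  have "((\<lambda>x. \<theta> (norm x)) has_derivative (\<lambda>h. th' * (inverse (norm x) * (inner h x)))) (at x)"
    using has_derivative_compose[OF has_derivative_norm[OF x0] th[unfolded has_field_derivative_def]]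
    by (simp add: sgn_div_norm inner_commute o_def)
  moreover have "(\<lambda>h. th' * (inverse (norm x) * (inner h x))) = (\<lambda>h. th' * (inner x h / norm x))"
    by (rule ext) (simp add: inner_commute divide_inverse)
  ultimately show ?thesis by simp
qed

lemma zeta_deriv:
  assumes th: "(\<theta> has_real_derivative th') (at (norm x))" and x0: "x \<noteq> 0"
  shows "(zeta \<theta> has_derivative (\<lambda>h. zeta \<theta> x * (cz h / cz x - \<i> * of_real (th' * (inner x h / norm x))))) (at x)"
proof -
  have cz0: "cz x \<noteq> 0" using x0 by (auto simp: cz_def complex_eq_iff prod_eq_iff)
  have n0: "norm x \<noteq> 0" using x0 by simp
  show ?thesis
  unfolding zeta_def[abs_def]
  apply (rule derivative_eq_intros thn_deriv[OF th x0] refl)+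
  apply (rule ext)
  using cz0 n0 apply (simp add: field_simps)
  done
qed

lemma ang_deriv:
  assumes th: "(\<theta> has_real_derivative th') (at (norm x))" and x0: "x \<noteq> 0"
    and nz: "zeta \<theta> x \<notin> \<real>\<^sub>\<le>\<^sub>0"
  shows "(ang \<theta> has_derivative (\<lambda>h. (fst x * snd h - snd x * fst h) / (fst x ^ 2 + snd x ^ 2)
              - th' * (fst x * fst h + snd x * snd h) / norm x)) (at x)"
proof -
  have cz0: "cz x \<noteq> 0" using x0 by (auto simp: cz_def complex_eq_iff prod_eq_iff)
  have z0: "zeta \<theta> x \<noteq> 0" using nz by auto
  have L: "((\<lambda>x. Ln (zeta \<theta> x)) has_derivative (\<lambda>h. inverse (zeta \<theta> x) * (zeta \<theta> x * (cz h / cz x - \<i> * of_real (th' * (inner x h / norm x)))))) (at x)"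
    using has_derivative_compose[OF zeta_deriv[OF th x0] has_field_derivative_Ln[OF nz, unfolded has_field_derivative_def]]
    by (simp add: o_def)
  have "(ang \<theta> has_derivative (\<lambda>h. Im (inverse (zeta \<theta> x) * (zeta \<theta> x * (cz h / cz x - \<i> * of_real (th' * (inner x h / norm x))))))) (at x)"
    unfolding ang_def[abs_def]
    by (rule derivative_eq_intros L refl bounded_linear.has_derivative[OF bounded_linear_Im] | simp)+
  moreover have "(\<lambda>h. Im (inverse (zeta \<theta> x) * (zeta \<theta> x * (cz h / cz x - \<i> * of_real (th' * (inner x h / norm x)))))) =
     (\<lambda>h. (fst x * snd h - snd x * fst h) / (fst x ^ 2 + snd x ^ 2)
              - th' * (fst x * fst h + snd x * snd h) / norm x)"
  proof (intro ext)
    fix h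
    have e: "inverse (zeta \<theta> x) * (zeta \<theta> x * w) = w" for w using z0 by simp
    show "Im (inverse (zeta \<theta> x) * (zeta \<theta> x * (cz h / cz x - \<i> * of_real (th' * (inner x h / norm x))))) =
      (fst x * snd h - snd x * fst h) / (fst x ^ 2 + snd x ^ 2) - th' * (fst x * fst h + snd x * snd h) / norm x" (is ?thesis)
    proof -
      have n0: "norm x \<noteq> 0" using x0 by simp
      have s0: "fst x * fst x + snd x * snd x \<noteq> 0" using x0
        using n0 sq_norm[of x] by (metis power2_eq_square mult_eq_0_iff)
      show ?thesis using n0 s0 unfolding e by (simp add: Im_divide cz_def inner_prod_def algebra_simps) (simp add: n0 field_simps power2_eq_square)
    qed
  qed
  ultimately show ?thesis by simp
qed


lemma zeta_cis: "zeta \<theta> x = - cz x * cis (- \<theta> (norm x))"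
  by (simp add: zeta_def complex_eq_iff cz_def)

lemma cmod_cz: "cmod (cz x) = norm x"
  by (cases x) (simp add: cz_def cmod_def norm_Pair)

lemma cz_eq_iff: "cz x = w \<longleftrightarrow> x = (Re w, Im w)"
  by (cases x) (auto simp: cz_def complex_eq_iff)

lemma omega_char:
  assumes a: "0 < a" "a \<le> 1"
  shows "x \<in> curved_wedge a \<theta> \<longleftrightarrow> x \<noteq> 0 \<and> zeta \<theta> x \<notin> \<real>\<^sub>\<le>\<^sub>0 \<and> ang \<theta> x < 2 * pi * a"
proof -
  have pa: "2 * pi * a \<le> 2 * pi" using a by simp
  show ?thesis
proof
  assume "x \<in> curved_wedge a \<theta>"
  then obtain r t where r: "r > 0" and t: "0 < t" "t < 2 * pi * a"
    and x: "x = (r * cos (t + \<theta> r), r * sin (t + \<theta> r))"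
    unfolding curved_wedge_def by auto
  have nx: "norm x = r" using r
    by (simp add: x norm_Pair power_mult_distrib flip: distrib_left)
  have czx: "cz x = of_real r * cis (t + \<theta> r)"
    by (simp add: x cz_def complex_eq_iff)
  have z: "zeta \<theta> x = exp (of_real (ln r) + \<i> * of_real (t - pi))"
    unfolding zeta_cis nx czx exp_eq_polar using r
    by (simp add: cis_mult flip: cis_divide)
  have Lz: "Ln (zeta \<theta> x) = of_real (ln r) + \<i> * of_real (t - pi)"
    unfolding z proof (intro Ln_exp)
    have "t < 2 * pi" using t pa by linarith
    then show "- pi < Im (complex_of_real (ln r) + \<i> * complex_of_real (t - pi))" 
      "Im (complex_of_real (ln r) + \<i> * complex_of_real (t - pi)) \<le> pi" using t by auto
  qed
  have ang: "ang \<theta> x = t" unfolding ang_def Lz by simp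
  have x0: "x \<noteq> 0" using nx r by auto
  have "zeta \<theta> x \<notin> \<real>\<^sub>\<le>\<^sub>0"
  proof
    assume "zeta \<theta> x \<in> \<real>\<^sub>\<le>\<^sub>0"
    then have "Im (zeta \<theta> x) = 0" "Re (zeta \<theta> x) \<le> 0" by (auto simp: complex_nonpos_Reals_iff)
    then have s0: "sin t = 0" and c0: "0 \<le> cos t" using r unfolding z exp_eq_polar
      by (auto simp: zero_le_mult_iff)
    have "t < 2 * pi" using t pa by linarith
    then have "t - pi = 0" using t s0 sin_eq_0_pi[of "t - pi"] by (simp add: sin_diff)
    then show False using c0 by simp
  qed
  then show "x \<noteq> 0 \<and> zeta \<theta> x \<notin> \<real>\<^sub>\<le>\<^sub>0 \<and> ang \<theta> x < 2 * pi * a" using x0 ang t by simp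
next
  assume H: "x \<noteq> 0 \<and> zeta \<theta> x \<notin> \<real>\<^sub>\<le>\<^sub>0 \<and> ang \<theta> x < 2 * pi * a"
  define w where "w = Ln (zeta \<theta> x)"
  define t where "t = pi + Im w"
  define r where "r = norm x"
  have z0: "zeta \<theta> x \<noteq> 0" using H by auto
  have t: "0 < t" "t < 2 * pi * a"
    using H mpi_less_Im_Ln[OF z0] by (auto simp: t_def w_def ang_def)
  have r: "r > 0" using H by (simp add: r_def)
  have ew: "exp w = zeta \<theta> x" using z0 by (simp add: w_def)
  have "exp (Re w) = r"
    using arg_cong[OF ew, of cmod] by (simp add: norm_exp_eq_Re zeta_cis norm_mult cmod_cz r_def)
  then have "zeta \<theta> x = of_real r * cis (t - pi)"
    using ew by (simp add: exp_eq_polar t_def)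
  then have "cz x = of_real r * cis (t + \<theta> r)"
    unfolding zeta_cis r_def[symmetric]
  proof -
    assume E: "- cz x * cis (- \<theta> r) = complex_of_real r * cis (t - pi)"
    have "- cz x = - cz x * cis (- \<theta> r) * cis (\<theta> r)" by (simp add: cis_mult mult.assoc)
    also have "\<dots> = complex_of_real r * cis (t - pi + \<theta> r)" unfolding E by (simp add: cis_mult mult.assoc)
    also have "cis (t - pi + \<theta> r) = - cis (t + \<theta> r)"
      using cis_mult[of "t + \<theta> r" "- pi"] by (simp add: algebra_simps complex_eq_iff)
    finally show ?thesis by simp
  qed
  then have "x = (r * cos (t + \<theta> r), r * sin (t + \<theta> r))"
    by (simp add: cz_eq_iff)
  then show "x \<in> curved_wedge a \<theta>" unfolding curved_wedge_def using r t by auto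
qed
qed


lemma box_Pair_eq2: "box (a, c) (b, d) = box a b \<times> box c d"
  by (force simp: box_def Basis_prod_def)

lemma int_dx_zero:
  fixes W P :: "real \<times> real \<Rightarrow> real" and A B :: real
  assumes D: "\<And>t y. ((\<lambda>t. W (t,y)) has_real_derivative P (t,y)) (at t)"
    and C: "continuous_on UNIV P"
    and Z: "\<And>x. x \<notin> box (-A,-B) (A,B) \<Longrightarrow> W x = 0 \<and> P x = 0"
  shows "integrable lborel P" "integral\<^sup>L lborel P = 0"
proof -
  have PI: "P = (\<lambda>x. indicator (cbox (-A,-B) (A,B)) x *\<^sub>R P x)"
    using Z box_subset_cbox by (force simp: indicator_def)
  show int: "integrable lborel P"
    by (subst PI) (intro borel_integrable_compact compact_cbox continuous_on_subset[OF C], simp)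
  have inner: "(\<integral>t. P (t,y) \<partial>lborel) = 0" for y
  proof (cases "A \<le> 0")
    case True
    then have "box (-A,-B) (A,B) = {}" by (auto simp: box_Pair_eq2)
    then show ?thesis using Z by simp
  next
    case False
    have "(\<integral>t. P (t,y) \<partial>lborel) = (\<integral>t. indicator {-A..A} t *\<^sub>R P (t,y) \<partial>lborel)"
    proof (intro Bochner_Integration.integral_cong refl)
      fix t show "P (t,y) = indicator {-A..A} t *\<^sub>R P (t,y)"
        using Z[of "(t,y)"] by (cases "t \<in> {-A..A}") (auto simp: box_Pair_eq2)
    qed
    also have "\<dots> = W (A,y) - W (-A,y)"
    proof (rule integral_FTC_atLeastAtMost)
      show "-A \<le> A" using False by simp
      show "((\<lambda>t. W (t,y)) has_vector_derivative P (t,y)) (at t within {-A..A})" for t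
        by (rule has_vector_derivative_at_within) (simp add: has_real_derivative_iff_has_vector_derivative[symmetric] D)
      show "continuous_on {-A..A} (\<lambda>t. P (t,y))"
        by (intro continuous_on_compose2[OF C] continuous_intros) auto
    qed
    also have "\<dots> = 0" using Z[of "(A,y)"] Z[of "(-A,y)"] by (simp add: box_Pair_eq2)
    finally show ?thesis .
  qed
  have "integral\<^sup>L lborel P = integral\<^sup>L (lborel \<Otimes>\<^sub>M lborel) (case_prod (\<lambda>t y. P (t,y)))"
    by (simp add: lborel_prod)
  also have "\<dots> = (\<integral>y. (\<integral>t. P (t,y) \<partial>lborel) \<partial>lborel)"
    by (rule lborel_pair.integral_snd[symmetric]) (simp add: lborel_prod int)
  also have "\<dots> = 0" using inner by simp
  finally show "integral\<^sup>L lborel P = 0" .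
qed

lemma int_dy_zero:
  fixes W P :: "real \<times> real \<Rightarrow> real" and A B :: real
  assumes D: "\<And>t y. ((\<lambda>y. W (t,y)) has_real_derivative P (t,y)) (at y)"
    and C: "continuous_on UNIV P"
    and Z: "\<And>x. x \<notin> box (-A,-B) (A,B) \<Longrightarrow> W x = 0 \<and> P x = 0"
  shows "integrable lborel P" "integral\<^sup>L lborel P = 0"
proof -
  have PI: "P = (\<lambda>x. indicator (cbox (-A,-B) (A,B)) x *\<^sub>R P x)"
    using Z box_subset_cbox by (force simp: indicator_def)
  show int: "integrable lborel P"
    by (subst PI) (intro borel_integrable_compact compact_cbox continuous_on_subset[OF C], simp)
  have inner: "(\<integral>y. P (t,y) \<partial>lborel) = 0" for t
  proof (cases "B \<le> 0")
    case True
    then have "box (-A,-B) (A,B) = {}" by (auto simp: box_Pair_eq2)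
    then show ?thesis using Z by simp
  next
    case False
    have "(\<integral>y. P (t,y) \<partial>lborel) = (\<integral>y. indicator {-B..B} y *\<^sub>R P (t,y) \<partial>lborel)"
    proof (intro Bochner_Integration.integral_cong refl)
      fix y show "P (t,y) = indicator {-B..B} y *\<^sub>R P (t,y)"
        using Z[of "(t,y)"] by (cases "y \<in> {-B..B}") (auto simp: box_Pair_eq2)
    qed
    also have "\<dots> = W (t,B) - W (t,-B)"
    proof (rule integral_FTC_atLeastAtMost)
      show "-B \<le> B" using False by simp
      show "((\<lambda>y. W (t,y)) has_vector_derivative P (t,y)) (at y within {-B..B})" for y
        by (rule has_vector_derivative_at_within) (simp add: has_real_derivative_iff_has_vector_derivative[symmetric] D)
      show "continuous_on {-B..B} (\<lambda>y. P (t,y))"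
        by (intro continuous_on_compose2[OF C] continuous_intros) auto
    qed
    also have "\<dots> = 0" using Z[of "(t,B)"] Z[of "(t,-B)"] by (simp add: box_Pair_eq2)
    finally show ?thesis .
  qed
  have "integral\<^sup>L lborel P = integral\<^sup>L (lborel \<Otimes>\<^sub>M lborel) P"
    by (simp add: lborel_prod)
  also have "\<dots> = (\<integral>t. (\<integral>y. P (t,y) \<partial>lborel) \<partial>lborel)"
    by (rule lborel_pair.integral_fst'[symmetric]) (simp add: lborel_prod int)
  also have "\<dots> = 0" using inner by simp
  finally show "integral\<^sup>L lborel P = 0" .
qed


lemma partial1:
  assumes "(F has_derivative (\<lambda>h. A * fst h + B * snd h)) (at (t,y))"
  shows "((\<lambda>t. F (t,y)) has_real_derivative A) (at t)"
proof -
  have "((\<lambda>t. (t,y)) has_derivative (\<lambda>h. (h,0))) (at t)"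
    by (rule derivative_eq_intros refl)+
  from has_derivative_compose[OF this assms]
  show ?thesis by (rule has_derivative_imp_has_field_derivative) (auto simp: o_def)
qed

lemma partial2:
  assumes "(F has_derivative (\<lambda>h. A * fst h + B * snd h)) (at (t,y))"
  shows "((\<lambda>y. F (t,y)) has_real_derivative B) (at y)"
proof -
  have "((\<lambda>y. (t,y)) has_derivative (\<lambda>h. (0,h))) (at y)"
    by (rule derivative_eq_intros refl)+
  from has_derivative_compose[OF this assms]
  show ?thesis by (rule has_derivative_imp_has_field_derivative) (auto simp: o_def)
qed

definition cc :: "real \<Rightarrow> real \<Rightarrow> real" where "cc k t = k * cos (k*t) / sin (k*t)"
definition dcc :: "real \<Rightarrow> real \<Rightarrow> real" where "dcc k t = - (k^2) / (sin (k*t))^2"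

lemma cc_deriv: "sin (k*t) \<noteq> 0 \<Longrightarrow> (cc k has_real_derivative dcc k t) (at t)"
  unfolding cc_def[abs_def] dcc_def
  apply (rule derivative_eq_intros refl | simp)+
  apply (simp add: field_simps power2_eq_square)
  using sin_cos_squared_add[of "k*t"] unfolding power2_eq_square by algebra

lemma cc_id: "sin (k*t) \<noteq> 0 \<Longrightarrow> dcc k t + (cc k t)^2 = - (k^2)"
  unfolding cc_def dcc_def
  apply (simp add: field_simps power2_eq_square)
  using sin_cos_squared_add[of "k*t"] unfolding power2_eq_square by algebra


definition a1f :: "(real \<Rightarrow> real) \<Rightarrow> real \<times> real \<Rightarrow> real" where
  "a1f \<theta> x = - snd x / (fst x ^ 2 + snd x ^ 2) - deriv \<theta> (norm x) * fst x / norm x"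
definition a2f :: "(real \<Rightarrow> real) \<Rightarrow> real \<times> real \<Rightarrow> real" where
  "a2f \<theta> x = fst x / (fst x ^ 2 + snd x ^ 2) - deriv \<theta> (norm x) * snd x / norm x"

context
  fixes a :: real and \<theta> :: "real \<Rightarrow> real"
  assumes a0: "0 < a" and a1: "a \<le> 1" and thd: "\<forall>r>0. \<theta> differentiable (at r)"
    and thc: "continuous_on {0<..} (deriv \<theta>)"
begin

lemma thD: "r > 0 \<Longrightarrow> (\<theta> has_real_derivative deriv \<theta> r) (at r)"
  using thd DERIV_deriv_iff_real_differentiable by blast

lemma zeta_cont: "x \<noteq> 0 \<Longrightarrow> isCont (zeta \<theta>) x"
  using zeta_deriv[OF thD] has_derivative_continuous by fastforce

lemma ang_deriv2:
  assumes "x \<noteq> 0" "zeta \<theta> x \<notin> \<real>\<^sub>\<le>\<^sub>0"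
  shows "(ang \<theta> has_derivative (\<lambda>h. a1f \<theta> x * fst h + a2f \<theta> x * snd h)) (at x)"
proof -
  have n0: "norm x > 0" using assms by simp
  have s0: "fst x ^ 2 + snd x ^ 2 \<noteq> 0" using n0 sq_norm[of x] by auto
  from ang_deriv[OF thD[OF n0] assms]
  show ?thesis
    by (rule has_derivative_eq_rhs) (use n0 s0 in \<open>auto simp: a1f_def a2f_def fun_eq_iff algebra_simps diff_divide_distrib add_divide_distrib\<close>)
qed

lemma open_Om: "open (curved_wedge a \<theta>)"
proof -
  define U0 where "U0 = - {0 :: real \<times> real}"
  have oU0: "open U0" by (simp add: U0_def open_Compl)
  have cU0: "continuous_on U0 (zeta \<theta>)"
    by (intro continuous_at_imp_continuous_on) (auto simp: U0_def intro: zeta_cont)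
  define U1 where "U1 = zeta \<theta> -` (- \<real>\<^sub>\<le>\<^sub>0) \<inter> U0"
  have oU1: "open U1" using cU0 oU0 unfolding U1_def continuous_on_open_vimage[OF oU0]
    by (simp add: open_Compl)
  have cU1: "continuous_on U1 (ang \<theta>)"
    by (intro continuous_at_imp_continuous_on ballI has_derivative_continuous[OF ang_deriv2])
       (auto simp: U1_def U0_def)
  define U2 where "U2 = ang \<theta> -` {..<2*pi*a} \<inter> U1"
  have "open U2" using cU1 oU1 unfolding U2_def continuous_on_open_vimage[OF oU1] by simp
  moreover have "U2 = curved_wedge a \<theta>"
    using omega_char[OF a0 a1] by (auto simp: U2_def U1_def U0_def)
  ultimately show ?thesis by simp
qed

lemma ang_in: assumes "x \<in> curved_wedge a \<theta>" shows "0 < ang \<theta> x" "ang \<theta> x < 2*pi*a"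
proof -
  have "zeta \<theta> x \<notin> \<real>\<^sub>\<le>\<^sub>0" "ang \<theta> x < 2*pi*a" using assms unfolding omega_char[OF a0 a1] by auto
  moreover then have "zeta \<theta> x \<noteq> 0" by auto
  ultimately show "0 < ang \<theta> x" "ang \<theta> x < 2*pi*a"
    using mpi_less_Im_Ln[of "zeta \<theta> x"] unfolding ang_def by auto
qed

lemma sin_ne: assumes "x \<in> curved_wedge a \<theta>" shows "sin (1/(2*a) * ang \<theta> x) \<noteq> 0"
proof -
  have "0 < 1/(2*a) * ang \<theta> x" using ang_in[OF assms] a0 by simp
  moreover have "1/(2*a) * ang \<theta> x < pi" using ang_in[OF assms] a0 by (simp add: field_simps)
  ultimately show ?thesis using sin_gt_zero by fastforce
qed

lemma Om_nz: "x \<in> curved_wedge a \<theta> \<Longrightarrow> x \<noteq> 0"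
  using omega_char[OF a0 a1] by auto

lemma Om_cond: "x \<in> curved_wedge a \<theta> \<Longrightarrow> zeta \<theta> x \<notin> \<real>\<^sub>\<le>\<^sub>0"
  using omega_char[OF a0 a1] by auto

end


definition sq2 :: "real \<times> real \<Rightarrow> real" where "sq2 x = fst x ^ 2 + snd x ^ 2"
definition qq where "qq f \<theta> k x = f x ^ 2 * cc k (ang \<theta> x)"
definition q1 where "q1 f G \<theta> k x = 2 * f x * fst (G x) * cc k (ang \<theta> x) + f x ^ 2 * dcc k (ang \<theta> x) * a1f \<theta> x"
definition q2 where "q2 f G \<theta> k x = 2 * f x * snd (G x) * cc k (ang \<theta> x) + f x ^ 2 * dcc k (ang \<theta> x) * a2f \<theta> x"
definition W1 where "W1 f \<theta> k x = - snd x * qq f \<theta> k x / sq2 x"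
definition P1 where "P1 f G \<theta> k x = - snd x * q1 f G \<theta> k x / sq2 x + 2 * fst x * snd x * qq f \<theta> k x / (sq2 x)^2"
definition W2 where "W2 f \<theta> k x = fst x * qq f \<theta> k x / sq2 x"
definition P2 where "P2 f G \<theta> k x = fst x * q2 f G \<theta> k x / sq2 x - 2 * fst x * snd x * qq f \<theta> k x / (sq2 x)^2"

lemma quot_rule:
  assumes "(Q has_real_derivative dQ) (at t)" "(S has_real_derivative dS) (at t)" "S t \<noteq> 0"
  shows "((\<lambda>t. c * Q t / S t) has_real_derivative (c * dQ / S t - c * Q t * dS / (S t)^2)) (at t)"
  using assms
  by (auto intro!: derivative_eq_intros simp: field_simps power2_eq_square)

lemma sq2_pos: "x \<noteq> 0 \<Longrightarrow> sq2 x > 0"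
  using sq_norm[of x] by (simp add: sq2_def) (metis zero_less_norm_iff zero_less_power)

lemma fzero_all: "f x = 0 \<Longrightarrow> qq f \<theta> k x = 0 \<and> q1 f G \<theta> k x = 0 \<and> q2 f G \<theta> k x = 0 \<and>
   W1 f \<theta> k x = 0 \<and> P1 f G \<theta> k x = 0 \<and> W2 f \<theta> k x = 0 \<and> P2 f G \<theta> k x = 0"
  by (simp add: qq_def q1_def q2_def W1_def P1_def W2_def P2_def)

locale tf =
  fixes a :: real and \<theta> :: "real \<Rightarrow> real"
    and f :: "real \<times> real \<Rightarrow> real" and G :: "real \<times> real \<Rightarrow> real \<times> real" and K :: "(real \<times> real) set"
  assumes a0: "0 < a" and a1: "a \<le> 1" and thd: "\<forall>r>0. \<theta> differentiable (at r)"
    and thc: "continuous_on {0<..} (deriv \<theta>)"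
    and fG: "\<And>x. (f has_derivative (\<lambda>h. inner h (G x))) (at x)"
    and Gc: "continuous_on UNIV G"
    and Kc: "compact K" and KO: "K \<subseteq> curved_wedge a \<theta>" and fK: "\<And>x. x \<notin> K \<Longrightarrow> f x = 0"
begin

lemmas Om_nz' = Om_nz[OF a0 a1 thd thc]
lemmas Om_cond' = Om_cond[OF a0 a1 thd thc]
lemmas sin_ne' = sin_ne[OF a0 a1 thd thc]
lemmas ang_deriv2' = ang_deriv2[OF a0 a1 thd thc]
lemmas open_Om' = open_Om[OF a0 a1 thd thc]
lemmas thD' = thD[OF a0 a1 thd thc]

lemma fG2: "(f has_derivative (\<lambda>h. fst (G x) * fst h + snd (G x) * snd h)) (at x)"
  using fG[of x] by (rule has_derivative_eq_rhs) (auto simp: fun_eq_iff inner_prod_def)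

lemma Kcl: "closed K" using Kc compact_imp_closed by blast

lemma line1_open: "open {t. (t, y) \<notin> K}"
proof -
  have "{t. (t, y) \<notin> K} = (\<lambda>t. (t,y)) -` (- K)" by auto
  also have "open \<dots>" by (intro open_vimage open_Compl Kcl continuous_intros)
  finally show ?thesis .
qed

lemma line2_open: "open {y. (t, y) \<notin> K}"
proof -
  have "{y. (t, y) \<notin> K} = (\<lambda>y. (t,y)) -` (- K)" by auto
  also have "open \<dots>" by (intro open_vimage open_Compl Kcl continuous_intros)
  finally show ?thesis .
qed

abbreviation "k \<equiv> 1 / (2 * a)"

lemma W1_deriv: "((\<lambda>t. W1 f \<theta> k (t,y)) has_real_derivative P1 f G \<theta> k (t,y)) (at t)"
proof (cases "(t,y) \<in> curved_wedge a \<theta>")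
  case True
  have df: "((\<lambda>t. f (t,y)) has_real_derivative fst (G (t,y))) (at t)"
    by (rule partial1[OF fG2])
  have dang: "((\<lambda>t. ang \<theta> (t,y)) has_real_derivative a1f \<theta> (t,y)) (at t)"
    by (rule partial1[OF ang_deriv2'[OF Om_nz'[OF True] Om_cond'[OF True]]])
  have dC: "((\<lambda>t. cc k (ang \<theta> (t,y))) has_real_derivative dcc k (ang \<theta> (t,y)) * a1f \<theta> (t,y)) (at t)"
    by (rule DERIV_chain2[OF cc_deriv[OF sin_ne'[OF True]] dang])
  have "0 < t^2 + y^2" using sq2_pos[OF Om_nz'[OF True]] by (simp add: sq2_def)
  then have s0: "t^2 + y^2 \<noteq> 0" by linarith
  have dQ: "((\<lambda>t. f (t,y) ^ 2 * cc k (ang \<theta> (t,y))) has_real_derivative q1 f G \<theta> k (t,y)) (at t)"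
    by (rule derivative_eq_intros df dC refl)+ (simp add: q1_def algebra_simps)
  have dS: "((\<lambda>t. t^2 + y^2) has_real_derivative 2 * t) (at t)"
    by (rule derivative_eq_intros refl)+ simp
  have "((\<lambda>t. (- y) * (f (t,y) ^ 2 * cc k (ang \<theta> (t,y))) / (t^2 + y^2)) has_real_derivative P1 f G \<theta> k (t,y)) (at t)"
    using quot_rule[OF dQ dS, of "- y"] s0 by (simp add: P1_def qq_def sq2_def algebra_simps)
  then show ?thesis by (simp add: W1_def qq_def sq2_def)
next
  case False
  then have nK: "(t,y) \<notin> K" using KO by auto
  have "((\<lambda>t. 0) has_real_derivative 0) (at t)" by simp
  then have "((\<lambda>t. W1 f \<theta> k (t,y)) has_real_derivative 0) (at t)"
    by (rule has_field_derivative_transform_within_open[OF _ line1_open]) (use nK fK fzero_all[where f=f and G=G and \<theta>=\<theta> and k=k] in auto)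
  then show ?thesis using fzero_all[where f=f and G=G and \<theta>=\<theta> and k=k, OF fK[OF nK]] by simp
qed

end


lemma key_ineq:
  fixes S x1 x2 g1 g2 F C D b1 b2 k :: real
  assumes S: "S > 0" "x1^2 + x2^2 = S" and CD: "D + C^2 = - (k^2)" and b: "x1 * b2 - x2 * b1 = 1"
  shows "(- x2 * (2*F*g1*C + F^2*D*b1) / S + 2*x1*x2*(F^2*C) / S^2)
       + (x1 * (2*F*g2*C + F^2*D*b2) / S - 2*x1*x2*(F^2*C) / S^2) + k^2 * (F^2 / S) \<le> g1^2 + g2^2"
proof -
  define w where "w = x1 * g2 - x2 * g1"
  have "(- x2 * (2*F*g1*C + F^2*D*b1) / S + 2*x1*x2*(F^2*C) / S^2)
       + (x1 * (2*F*g2*C + F^2*D*b2) / S - 2*x1*x2*(F^2*C) / S^2) + k^2 * (F^2 / S)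
     = (2*F*C*w + F^2 * D * (x1 * b2 - x2 * b1) + k^2 * F^2) / S"
    using S by (simp add: w_def field_simps)
  also have "\<dots> = (2*F*C*w - C^2 * F^2) / S"
  proof -
    have k2: "k^2 = - D - C^2" using CD by linarith
    show ?thesis unfolding b k2 by (simp add: algebra_simps)
  qed
  also have "\<dots> \<le> g1^2 + g2^2"
  proof -
    have "S * (g1^2 + g2^2) = (x1*g1 + x2*g2)^2 + w^2" using S(2)[symmetric] by (simp add: w_def algebra_simps power2_eq_square)
    moreover have "2*F*C*w - C^2 * F^2 \<le> w^2" using sum_squares_ge_zero[of 0 "w - C*F"]
      by (simp add: power2_eq_square algebra_simps)
    ultimately have "2*F*C*w - C^2 * F^2 \<le> S * (g1^2 + g2^2)"
      by (metis add.commute le_add_same_cancel2 order_trans zero_le_power2)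
    then show ?thesis using S by (simp add: divide_le_eq mult.commute)
  qed
  finally show ?thesis .
qed

context tf begin

lemma W2_deriv: "((\<lambda>y. W2 f \<theta> k (t,y)) has_real_derivative P2 f G \<theta> k (t,y)) (at y)"
proof (cases "(t,y) \<in> curved_wedge a \<theta>")
  case True
  have df: "((\<lambda>y. f (t,y)) has_real_derivative snd (G (t,y))) (at y)"
    by (rule partial2[OF fG2])
  have dang: "((\<lambda>y. ang \<theta> (t,y)) has_real_derivative a2f \<theta> (t,y)) (at y)"
    by (rule partial2[OF ang_deriv2'[OF Om_nz'[OF True] Om_cond'[OF True]]])
  have dC: "((\<lambda>y. cc k (ang \<theta> (t,y))) has_real_derivative dcc k (ang \<theta> (t,y)) * a2f \<theta> (t,y)) (at y)"
    by (rule DERIV_chain2[OF cc_deriv[OF sin_ne'[OF True]] dang])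
  have "0 < t^2 + y^2" using sq2_pos[OF Om_nz'[OF True]] by (simp add: sq2_def)
  then have s0: "t^2 + y^2 \<noteq> 0" by linarith
  have dQ: "((\<lambda>y. f (t,y) ^ 2 * cc k (ang \<theta> (t,y))) has_real_derivative q2 f G \<theta> k (t,y)) (at y)"
    by (rule derivative_eq_intros df dC refl)+ (simp add: q2_def algebra_simps)
  have dS: "((\<lambda>y. t^2 + y^2) has_real_derivative 2 * y) (at y)"
    by (rule derivative_eq_intros refl)+ simp
  have "((\<lambda>y. t * (f (t,y) ^ 2 * cc k (ang \<theta> (t,y))) / (t^2 + y^2)) has_real_derivative P2 f G \<theta> k (t,y)) (at y)"
    using quot_rule[OF dQ dS, of "t"] s0 by (simp add: P2_def qq_def sq2_def algebra_simps)
  then show ?thesis by (simp add: W2_def qq_def sq2_def)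
next
  case False
  then have nK: "(t,y) \<notin> K" using KO by auto
  have "((\<lambda>y. 0) has_real_derivative 0) (at y)" by simp
  then have "((\<lambda>y. W2 f \<theta> k (t,y)) has_real_derivative 0) (at y)"
    by (rule has_field_derivative_transform_within_open[OF _ line2_open]) (use nK fK fzero_all[where f=f and G=G and \<theta>=\<theta> and k=k] in auto)
  then show ?thesis using fzero_all[where f=f and G=G and \<theta>=\<theta> and k=k, OF fK[OF nK]] by simp
qed

lemma nK_nhds: "x \<notin> K \<Longrightarrow> eventually (\<lambda>y. f y = 0) (nhds x)"
  using fK Kcl by (intro eventually_nhds_in_open[of "- K", THEN eventually_mono]) auto

lemma loc_cont:
  fixes h :: "real \<times> real \<Rightarrow> real"
  assumes "x \<notin> K" "\<And>y. f y = 0 \<Longrightarrow> h y = 0"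
  shows "isCont h x"
proof -
  have "eventually (\<lambda>y. (\<lambda>_. 0::real) y = h y) (nhds x)"
    using nK_nhds[OF assms(1)] by eventually_elim (use assms(2) in auto)
  then have "isCont (\<lambda>_. 0::real) x = isCont h x" by (rule isCont_cong)
  then show ?thesis by simp
qed

lemma cont_facts:
  assumes x: "x \<in> curved_wedge a \<theta>"
  shows "isCont f x" "isCont (\<lambda>x. fst (G x)) x" "isCont (\<lambda>x. snd (G x)) x"
    "isCont (\<lambda>x. cc k (ang \<theta> x)) x" "isCont (\<lambda>x. dcc k (ang \<theta> x)) x"
    "isCont (\<lambda>x. deriv \<theta> (norm x)) x"
proof -
  show "isCont f x" using fG has_derivative_continuous by blast
  have "isCont G x" using Gc continuous_on_eq_continuous_at[OF open_UNIV] by blast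
  then show "isCont (\<lambda>x. fst (G x)) x" "isCont (\<lambda>x. snd (G x)) x" by (auto intro: continuous_intros)
  have ca: "isCont (ang \<theta>) x"
    using has_derivative_continuous[OF ang_deriv2'[OF Om_nz'[OF x] Om_cond'[OF x]]] .
  have "isCont (cc k) (ang \<theta> x)" using DERIV_isCont[OF cc_deriv[OF sin_ne'[OF x]]] .
  then show "isCont (\<lambda>x. cc k (ang \<theta> x)) x" by (rule isCont_o2[OF ca])
  have "isCont (dcc k) (ang \<theta> x)" unfolding dcc_def[abs_def] using sin_ne'[OF x]
    by (intro continuous_intros) auto
  then show "isCont (\<lambda>x. dcc k (ang \<theta> x)) x" by (rule isCont_o2[OF ca])
  have "norm x > 0" using Om_nz'[OF x] by simp
  then have cd: "isCont (deriv \<theta>) (norm x)" using thc by (simp add: continuous_on_eq_continuous_at)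
  show "isCont (\<lambda>x. deriv \<theta> (norm x)) x" using isCont_o2[where f=norm and a=x and g="deriv \<theta>"] cd by (auto intro: continuous_intros)
qed

lemma P1_cont: "isCont (P1 f G \<theta> k) x"
proof (cases "x \<in> curved_wedge a \<theta>")
  case True
  note c = cont_facts[OF True]
  have s0: "sq2 x \<noteq> 0" "norm x \<noteq> 0" using sq2_pos[OF Om_nz'[OF True]] Om_nz'[OF True] by auto
  then have s1: "fst x ^ 2 + snd x ^ 2 \<noteq> 0" by (simp add: sq2_def)
  then have s2: "(fst x ^ 2 + snd x ^ 2)^2 \<noteq> 0" by simp
  note nz = s0(2) s1 s2
  show ?thesis unfolding P1_def q1_def qq_def a1f_def sq2_def
    by (rule c continuous_intros nz)+
next
  case False
  then show ?thesis using KO by (intro loc_cont) (auto simp: fzero_all)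
qed

lemma P2_cont: "isCont (P2 f G \<theta> k) x"
proof (cases "x \<in> curved_wedge a \<theta>")
  case True
  note c = cont_facts[OF True]
  have s0: "sq2 x \<noteq> 0" "norm x \<noteq> 0" using sq2_pos[OF Om_nz'[OF True]] Om_nz'[OF True] by auto
  then have s1: "fst x ^ 2 + snd x ^ 2 \<noteq> 0" by (simp add: sq2_def)
  then have s2: "(fst x ^ 2 + snd x ^ 2)^2 \<noteq> 0" by simp
  note nz = s0(2) s1 s2
  show ?thesis unfolding P2_def q2_def qq_def a2f_def sq2_def
    by (rule c continuous_intros nz)+
next
  case False
  then show ?thesis using KO by (intro loc_cont) (auto simp: fzero_all)
qed

end


context tf begin

lemma G0: assumes "x \<notin> K" shows "G x = 0"
proof -
  have "(f has_derivative (\<lambda>h. 0)) (at x)"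
    by (rule has_derivative_transform_within_open[OF has_derivative_const[of 0] _ _, where s="- K"])
       (use Kcl assms fK in auto)
  from has_derivative_unique[OF fG this]
  have "(\<lambda>h. inner h (G x)) = (\<lambda>h. 0)" .
  then have "inner (G x) (G x) = 0" by metis
  then show ?thesis by simp
qed

lemma f_cont: "continuous_on UNIV f"
  using fG has_derivative_continuous continuous_at_imp_continuous_on by blast

lemma K_nz: "x \<in> K \<Longrightarrow> sq2 x \<noteq> 0"
  using KO Om_nz' sq2_pos by fastforce

lemma int_G: "integrable lborel (\<lambda>x. (norm (G x))^2)"
proof -
  have eq: "(\<lambda>x. (norm (G x))^2) = (\<lambda>x. indicator K x *\<^sub>R (norm (G x))^2)"
    using G0 by (auto simp: fun_eq_iff indicator_def)
  show ?thesis unfolding eq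
    by (intro borel_integrable_compact Kc continuous_intros continuous_on_subset[OF Gc]) auto
qed

lemma int_f: "integrable lborel (\<lambda>x. f x ^ 2 / sq2 x)"
proof -
  have eq: "(\<lambda>x. f x ^ 2 / sq2 x) = (\<lambda>x. indicator K x *\<^sub>R (f x ^ 2 / sq2 x))"
    using fK by (auto simp: fun_eq_iff indicator_def)
  show ?thesis unfolding eq unfolding sq2_def
    by (intro borel_integrable_compact Kc continuous_intros continuous_on_subset[OF f_cont])
       (use K_nz in \<open>auto simp: sq2_def\<close>)
qed

lemma K_box: obtains A B where "\<And>x. x \<notin> box (-A,-B) (A,B) \<Longrightarrow> x \<notin> K"
proof -
  obtain c where "K \<subseteq> box (-c) c" using bounded_subset_box_symmetric[OF compact_imp_bounded[OF Kc]] by blast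
  then show ?thesis using that[of "fst c" "snd c"] by (cases c) auto
qed

lemma intP1: "integrable lborel (P1 f G \<theta> k)" "integral\<^sup>L lborel (P1 f G \<theta> k) = 0"
proof -
  obtain A B where AB: "\<And>x. x \<notin> box (-A,-B) (A,B) \<Longrightarrow> x \<notin> K" using K_box by blast
  have C: "continuous_on UNIV (P1 f G \<theta> k)" using P1_cont by (simp add: continuous_at_imp_continuous_on)
  have Z: "x \<notin> box (-A,-B) (A,B) \<Longrightarrow> W1 f \<theta> k x = 0 \<and> P1 f G \<theta> k x = 0" for x
    using fzero_all[where f=f and G=G and \<theta>=\<theta> and k=k, OF fK[OF AB]] by simp
  show "integrable lborel (P1 f G \<theta> k)" "integral\<^sup>L lborel (P1 f G \<theta> k) = 0"
    using int_dx_zero[where W="W1 f \<theta> k", OF W1_deriv C Z] by auto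
qed

lemma intP2: "integrable lborel (P2 f G \<theta> k)" "integral\<^sup>L lborel (P2 f G \<theta> k) = 0"
proof -
  obtain A B where AB: "\<And>x. x \<notin> box (-A,-B) (A,B) \<Longrightarrow> x \<notin> K" using K_box by blast
  have C: "continuous_on UNIV (P2 f G \<theta> k)" using P2_cont by (simp add: continuous_at_imp_continuous_on)
  have Z: "x \<notin> box (-A,-B) (A,B) \<Longrightarrow> W2 f \<theta> k x = 0 \<and> P2 f G \<theta> k x = 0" for x
    using fzero_all[where f=f and G=G and \<theta>=\<theta> and k=k, OF fK[OF AB]] by simp
  show "integrable lborel (P2 f G \<theta> k)" "integral\<^sup>L lborel (P2 f G \<theta> k) = 0"
    using int_dy_zero[where W="W2 f \<theta> k", OF W2_deriv C Z] by auto
qed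

lemma pw: "P1 f G \<theta> k x + P2 f G \<theta> k x + k^2 * (f x ^ 2 / sq2 x) \<le> (norm (G x))^2"
proof (cases "x \<in> curved_wedge a \<theta>")
  case True
  have S: "sq2 x > 0" "fst x ^ 2 + snd x ^ 2 = sq2 x" using sq2_pos[OF Om_nz'[OF True]] by (auto simp: sq2_def)
  have n0: "norm x \<noteq> 0" using Om_nz'[OF True] by simp
  have CD: "dcc k (ang \<theta> x) + (cc k (ang \<theta> x))^2 = - (k^2)" by (rule cc_id[OF sin_ne'[OF True]])
  have b: "fst x * a2f \<theta> x - snd x * a1f \<theta> x = 1"
  proof -
    have "fst x * a2f \<theta> x - snd x * a1f \<theta> x = (fst x * fst x + snd x * snd x) / sq2 x"
      unfolding a1f_def a2f_def S(2) by (simp add: algebra_simps diff_divide_distrib add_divide_distrib)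
    also have "\<dots> = 1" using S by (simp add: power2_eq_square)
    finally show ?thesis .
  qed
  have "P1 f G \<theta> k x + P2 f G \<theta> k x + k^2 * (f x ^ 2 / sq2 x) \<le> (fst (G x))^2 + (snd (G x))^2"
    using key_ineq[OF S CD b, of "f x" "fst (G x)" "snd (G x)"]
    by (simp add: P1_def P2_def q1_def q2_def qq_def)
  then show ?thesis by (simp add: sq_norm)
next
  case False
  then have "x \<notin> K" using KO by auto
  then have fx: "f x = 0" by (rule fK)
  show ?thesis using fzero_all[where f=f and G=G and \<theta>=\<theta> and k=k, OF fx] fx by simp
qed

lemma bochner_ineq: "k^2 * integral\<^sup>L lborel (\<lambda>x. f x ^ 2 / sq2 x) \<le> integral\<^sup>L lborel (\<lambda>x. (norm (G x))^2)"
proof -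
  have "integral\<^sup>L lborel (\<lambda>x. P1 f G \<theta> k x + P2 f G \<theta> k x + k^2 * (f x ^ 2 / sq2 x))
      \<le> integral\<^sup>L lborel (\<lambda>x. (norm (G x))^2)"
    by (intro integral_mono pw int_G Bochner_Integration.integrable_add intP1 intP2 integrable_mult_right int_f)
  moreover have "integral\<^sup>L lborel (\<lambda>x. P1 f G \<theta> k x + P2 f G \<theta> k x + k^2 * (f x ^ 2 / sq2 x))
      = k^2 * integral\<^sup>L lborel (\<lambda>x. f x ^ 2 / sq2 x)"
  proof -
    have "integral\<^sup>L lborel (\<lambda>x. P1 f G \<theta> k x + P2 f G \<theta> k x + k^2 * (f x ^ 2 / sq2 x))
       = integral\<^sup>L lborel (\<lambda>x. P1 f G \<theta> k x + P2 f G \<theta> k x) + integral\<^sup>L lborel (\<lambda>x. k^2 * (f x ^ 2 / sq2 x))"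
      by (intro Bochner_Integration.integral_add Bochner_Integration.integrable_add intP1 intP2 integrable_mult_right int_f)
    also have "integral\<^sup>L lborel (\<lambda>x. P1 f G \<theta> k x + P2 f G \<theta> k x) = 0"
      using Bochner_Integration.integral_add[OF intP1(1) intP2(1)] intP1(2) intP2(2) by simp
    also have "integral\<^sup>L lborel (\<lambda>x. k^2 * (f x ^ 2 / sq2 x)) = k^2 * integral\<^sup>L lborel (\<lambda>x. f x ^ 2 / sq2 x)"
      by (rule integral_mult_right_zero)
    finally show ?thesis by simp
  qed
  ultimately show ?thesis by simp
qed

lemma tf_ineq: "ennreal (k^2) * (\<integral>\<^sup>+ x \<in> curved_wedge a \<theta>. ennreal ((f x)^2 / (norm x)^2) \<partial>lborel)
   \<le> (\<integral>\<^sup>+ x \<in> curved_wedge a \<theta>. ennreal ((norm (G x))^2) \<partial>lborel)"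
proof -
  have e1: "(\<integral>\<^sup>+ x \<in> curved_wedge a \<theta>. ennreal ((f x)^2 / (norm x)^2) \<partial>lborel)
       = (\<integral>\<^sup>+ x. ennreal (f x ^ 2 / sq2 x) \<partial>lborel)"
  proof (intro nn_integral_cong)
    fix x show "ennreal ((f x)^2 / (norm x)^2) * indicator (curved_wedge a \<theta>) x = ennreal (f x ^ 2 / sq2 x)"
    proof (cases "x \<in> curved_wedge a \<theta>")
      case True then show ?thesis by (simp add: sq2_def sq_norm)
    next
      case False then have "x \<notin> K" using KO by blast
      then have "f x = 0" by (rule fK)
      with False show ?thesis by simp
    qed
  qed
  also have "\<dots> = ennreal (integral\<^sup>L lborel (\<lambda>x. f x ^ 2 / sq2 x))"
    by (rule nn_integral_eq_integral[OF int_f]) (auto simp: sq2_def)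
  finally have e1': "(\<integral>\<^sup>+ x \<in> curved_wedge a \<theta>. ennreal ((f x)^2 / (norm x)^2) \<partial>lborel) = ennreal (integral\<^sup>L lborel (\<lambda>x. f x ^ 2 / sq2 x))" .
  have e2: "(\<integral>\<^sup>+ x \<in> curved_wedge a \<theta>. ennreal ((norm (G x))^2) \<partial>lborel)
       = (\<integral>\<^sup>+ x. ennreal ((norm (G x))^2) \<partial>lborel)"
  proof (intro nn_integral_cong)
    fix x show "ennreal ((norm (G x))^2) * indicator (curved_wedge a \<theta>) x = ennreal ((norm (G x))^2)"
    proof (cases "x \<in> curved_wedge a \<theta>")
      case True then show ?thesis by simp
    next
      case False then have "x \<notin> K" using KO by blast
      then have "G x = 0" by (rule G0)
      with False show ?thesis by simp
    qed
  qed
  also have "\<dots> = ennreal (integral\<^sup>L lborel (\<lambda>x. (norm (G x))^2))"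
    by (rule nn_integral_eq_integral[OF int_G]) auto
  finally have e2': "(\<integral>\<^sup>+ x \<in> curved_wedge a \<theta>. ennreal ((norm (G x))^2) \<partial>lborel) = ennreal (integral\<^sup>L lborel (\<lambda>x. (norm (G x))^2))" .
  have nn: "0 \<le> integral\<^sup>L lborel (\<lambda>x. f x ^ 2 / sq2 x)"
    by (intro integral_nonneg_AE) (auto simp: sq2_def)
  show ?thesis unfolding e1' e2'
    using bochner_ineq nn by (simp add: ennreal_mult''[symmetric] ennreal_leI)
qed

end


lemma sq_split:
  fixes e a b c :: real
  assumes "0 < e" "0 \<le> a" "0 \<le> b" "0 \<le> c" "c \<le> a + b"
  shows "c^2 \<le> (1+e)*a^2 + (1+1/e)*b^2"
proof -
  have "c^2 \<le> (a+b)^2" using assms by (intro power_mono) auto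
  also have "\<dots> = a^2 + 2*a*b + b^2" by (simp add: power2_eq_square algebra_simps)
  also have "2*a*b \<le> e*a^2 + b^2/e"
  proof -
    have "0 \<le> (e*a - b)^2" by simp
    then have "2*e*a*b \<le> e^2*a^2 + b^2" by (simp add: power2_eq_square algebra_simps)
    then have "2*a*b \<le> (e^2*a^2 + b^2)/e" using assms(1) by (simp add: field_simps)
    also have "\<dots> = e*a^2 + b^2/e" using assms(1) by (simp add: field_simps power2_eq_square)
    finally show ?thesis .
  qed
  finally show ?thesis using assms(1) by (simp add: algebra_simps add_divide_distrib)
qed

lemma le_of_eps:
  fixes X A :: ennreal
  assumes "\<And>j. X \<le> ennreal ((1 + 1/Suc j)^2) * A"
  shows "X \<le> A"
proof (cases "A = top")
  case True then show ?thesis by simp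
next
  case False
  have "(\<lambda>j. (1 + 1/real (Suc j))^2) \<longlonglongrightarrow> (1 + 0)^2"
    by (intro tendsto_intros LIMSEQ_inverse_real_of_nat[unfolded inverse_eq_divide])
  then have "(\<lambda>j. ennreal ((1 + 1/real (Suc j))^2)) \<longlonglongrightarrow> ennreal ((1+0)^2)" by (rule tendsto_ennrealI)
  then have "(\<lambda>j. ennreal ((1 + 1/real (Suc j))^2)) \<longlonglongrightarrow> ennreal 1" by simp
  then have "(\<lambda>j. A * ennreal ((1 + 1/real (Suc j))^2)) \<longlonglongrightarrow> A * ennreal 1"
    using False by (intro ennreal_tendsto_cmult) (auto simp: top.not_eq_extremum)
  then have L: "(\<lambda>j. ennreal ((1 + 1/real (Suc j))^2) * A) \<longlonglongrightarrow> A" by (simp add: mult.commute)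
  show ?thesis
    by (rule tendsto_le[OF trivial_limit_sequentially L tendsto_const]) (use assms in auto)
qed

lemma le_of_lim:
  fixes X Y :: ennreal
  assumes "\<And>n. X \<le> Y + Z n" "Z \<longlonglongrightarrow> 0"
  shows "X \<le> Y"
proof -
  have "(\<lambda>n. Y + Z n) \<longlonglongrightarrow> Y + 0" by (intro tendsto_intros assms(2))
  then show ?thesis
    by (intro tendsto_le[OF trivial_limit_sequentially _ tendsto_const]) (use assms(1) in auto)
qed

lemma smooth_grad_cont:
  assumes "smooth2 \<phi>" "\<And>x. GDERIV \<phi> x :> G x"
  shows "continuous_on UNIV G"
proof -
  obtain D where D0: "D 0 0 = \<phi>" and DD: "\<And>i j x. (D i j has_derivative
                 (\<lambda>h. fst h * D (Suc i) j x + snd h * D i (Suc j) x)) (at x)"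
    using assms(1) unfolding smooth2_def by blast
  have Geq: "G x = (D 1 0 x, D 0 1 x)" for x
  proof -
    have "(\<lambda>h. inner h (G x)) = (\<lambda>h. fst h * D 1 0 x + snd h * D 0 1 x)"
      using has_derivative_unique[OF assms(2)[of x, unfolded gderiv_def] DD[of 0 0 x, unfolded D0]] by simp
    from fun_cong[OF this, of "(1,0)"] fun_cong[OF this, of "(0,1)"]
    show ?thesis by (cases "G x") (simp add: inner_prod_def)
  qed
  have c: "continuous_on UNIV (D i j)" for i j
    using DD[of i j] has_derivative_continuous continuous_at_imp_continuous_on by blast
  have "G = (\<lambda>x. (D 1 0 x, D 0 1 x))" using Geq by auto
  then show ?thesis using c by (simp add: continuous_on_Pair)
qed


lemma ennreal_split:
  fixes p q s t r :: real
  assumes "0 \<le> p" "0 \<le> q" "0 \<le> s" "0 \<le> t" "r \<le> p*q + s*t"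
  shows "ennreal r \<le> ennreal p * ennreal q + ennreal s * ennreal t"
proof -
  have "ennreal r \<le> ennreal (p*q + s*t)" using assms(5) by (rule ennreal_leI)
  also have "\<dots> = ennreal p * ennreal q + ennreal s * ennreal t"
    using assms by (simp add: ennreal_plus ennreal_mult)
  finally show ?thesis .
qed

theorem mainTheorem12:
  fixes a :: real and \<theta> :: "real \<Rightarrow> real"
    and u :: "real \<times> real \<Rightarrow> real" and g :: "real \<times> real \<Rightarrow> real \<times> real"
  assumes "0 < a" "a \<le> 1"
    and "\<forall>r>0. \<theta> differentiable (at r)"
    and "continuous_on {0<..} (deriv \<theta>)"
    and "\<exists>M. \<forall>r>0. \<bar>r * deriv \<theta> r\<bar> \<le> M"
    and "H01_grad (curved_wedge a \<theta>) u g"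
  shows "(\<integral>\<^sup>+ x \<in> curved_wedge a \<theta>. ennreal ((norm (g x))\<^sup>2) \<partial>lborel)
         \<ge> ennreal (1 / (4 * a\<^sup>2)) *
           (\<integral>\<^sup>+ x \<in> curved_wedge a \<theta>. ennreal ((u x)\<^sup>2 / (norm x)\<^sup>2) \<partial>lborel)"
proof -
  define \<Omega> where "\<Omega> = curved_wedge a \<theta>"
  obtain \<phi> :: "nat \<Rightarrow> real \<times> real \<Rightarrow> real" and Gn :: "nat \<Rightarrow> real \<times> real \<Rightarrow> real \<times> real"
    where tfn: "\<And>n. test_fun \<Omega> (\<phi> n)" and gd: "\<And>n x. GDERIV (\<phi> n) x :> Gn n x"
    and Lu: "(\<lambda>n. \<integral>\<^sup>+ x. ennreal ((\<phi> n x - u x)\<^sup>2) \<partial>lborel) \<longlonglongrightarrow> 0"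
    and Lg: "(\<lambda>n. \<integral>\<^sup>+ x. ennreal ((norm (Gn n x - g x))\<^sup>2) \<partial>lborel) \<longlonglongrightarrow> 0"
    and um[measurable]: "u \<in> borel_measurable lborel" and gm[measurable]: "g \<in> borel_measurable lborel"
    using assms(6) unfolding H01_grad_def \<Omega>_def by blast
  have Omopen: "open \<Omega>" unfolding \<Omega>_def by (rule open_Om[OF assms(1-4)])
  have OmM[measurable]: "\<Omega> \<in> sets lborel" using Omopen by simp
  have phc: "continuous_on UNIV (\<phi> n)" for n
    using gd[of n] unfolding gderiv_def
    by (meson continuous_at_imp_continuous_on has_derivative_continuous)
  have phm[measurable]: "\<phi> n \<in> borel_measurable borel" for n
    by (rule borel_measurable_continuous_onI[OF phc])
  have Gc: "continuous_on UNIV (Gn n)" for n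
    using tfn[of n] gd[of n] smooth_grad_cont unfolding test_fun_def by blast
  have Gm[measurable]: "Gn n \<in> borel_measurable borel" for n
    by (rule borel_measurable_continuous_onI[OF Gc])
  define c where "c = ennreal (1 / (4 * a\<^sup>2))"
  define A where "A = (\<integral>\<^sup>+ x \<in> \<Omega>. ennreal ((norm (g x))\<^sup>2) \<partial>lborel)"
  define An where "An n = (\<integral>\<^sup>+ x \<in> \<Omega>. ennreal ((norm (Gn n x))\<^sup>2) \<partial>lborel)" for n
  define Bn where "Bn n = (\<integral>\<^sup>+ x \<in> \<Omega>. ennreal ((\<phi> n x)\<^sup>2 / (norm x)\<^sup>2) \<partial>lborel)" for n
  define Cn where "Cn n = (\<integral>\<^sup>+ x. ennreal ((norm (Gn n x - g x))\<^sup>2) \<partial>lborel)" for n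
  define Dn where "Dn n = (\<integral>\<^sup>+ x. ennreal ((\<phi> n x - u x)\<^sup>2) \<partial>lborel)" for n
  define Bm where "Bm m = (\<integral>\<^sup>+ x. ennreal ((u x)\<^sup>2 / (norm x)\<^sup>2) * indicator (\<Omega> \<inter> {x. 1 / real (Suc m) \<le> norm x}) x \<partial>lborel)" for m
  have T: "c * Bn n \<le> An n" for n
  proof -
    have tf: "smooth2 (\<phi> n)" "compact (closure {x. \<phi> n x \<noteq> 0})" "closure {x. \<phi> n x \<noteq> 0} \<subseteq> \<Omega>"
      using tfn[of n] unfolding test_fun_def by auto
    have tfi: "tf a \<theta> (\<phi> n) (Gn n) (closure {x. \<phi> n x \<noteq> 0})"
    proof (rule tf.intro)
      show "0 < a" "a \<le> 1" "\<forall>r>0. \<theta> differentiable (at r)" "continuous_on {0<..} (deriv \<theta>)" by (fact assms)+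
      show "((\<phi> n) has_derivative (\<lambda>h. inner h (Gn n x))) (at x)" for x using gd[of n x] by (simp add: gderiv_def)
      show "continuous_on UNIV (Gn n)" by (rule Gc)
      show "compact (closure {x. \<phi> n x \<noteq> 0})" by (rule tf(2))
      show "closure {x. \<phi> n x \<noteq> 0} \<subseteq> curved_wedge a \<theta>" using tf(3) unfolding \<Omega>_def .
      show "x \<notin> closure {x. \<phi> n x \<noteq> 0} \<Longrightarrow> \<phi> n x = 0" for x using closure_subset[of "{x. \<phi> n x \<noteq> 0}"] by blast
    qed
    note TI = tf.tf_ineq[OF tfi]
    have "(1 / (2 * a))^2 = 1 / (4 * a\<^sup>2)" by (simp add: power_divide power_mult_distrib)
    then show ?thesis using TI unfolding c_def Bn_def An_def \<Omega>_def by simp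
  qed
  have main: "c * Bm m \<le> A" for m
  proof (rule le_of_eps)
    fix j
    define \<epsilon> where "\<epsilon> = 1 / real (Suc j)"
    define \<delta> where "\<delta> = 1 / real (Suc m)"
    have ep: "\<epsilon> > 0" "\<delta> > 0" unfolding \<epsilon>_def \<delta>_def by auto
    define E where "E = ennreal (1 + \<epsilon>)"
    define e1 where "e1 = (1 + 1/\<epsilon>) / \<delta>^2"
    define e2 where "e2 = 1 + 1/\<epsilon>"
    have e1p: "e1 \<ge> 0" "e2 \<ge> 0" using ep unfolding e1_def e2_def by auto
    have i: "Bm m \<le> E * Bn n + ennreal e1 * Dn n" for n
    proof -
      have "Bm m \<le> (\<integral>\<^sup>+ x. E * (ennreal ((\<phi> n x)\<^sup>2 / (norm x)\<^sup>2) * indicator \<Omega> x) + ennreal e1 * ennreal ((\<phi> n x - u x)\<^sup>2) \<partial>lborel)"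
        unfolding Bm_def
      proof (intro nn_integral_mono)
        fix x
        show "ennreal ((u x)\<^sup>2 / (norm x)\<^sup>2) * indicator (\<Omega> \<inter> {x. 1 / real (Suc m) \<le> norm x}) x
            \<le> E * (ennreal ((\<phi> n x)\<^sup>2 / (norm x)\<^sup>2) * indicator \<Omega> x) + ennreal e1 * ennreal ((\<phi> n x - u x)\<^sup>2)"
        proof (cases "x \<in> \<Omega> \<inter> {x. 1 / real (Suc m) \<le> norm x}")
          case True
          then have xO: "x \<in> \<Omega>" and xd: "\<delta> \<le> norm x" by (auto simp: \<delta>_def)
          have np: "norm x > 0" using xd ep by linarith
          have s: "(u x)\<^sup>2 \<le> (1+\<epsilon>) * (\<phi> n x)\<^sup>2 + (1 + 1/\<epsilon>) * (\<phi> n x - u x)\<^sup>2"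
          proof -
            have "\<bar>u x\<bar> \<le> \<bar>\<phi> n x\<bar> + \<bar>\<phi> n x - u x\<bar>" by linarith
            from sq_split[OF ep(1) abs_ge_zero abs_ge_zero abs_ge_zero this] show ?thesis by simp
          qed
          have "(u x)\<^sup>2 / (norm x)\<^sup>2 \<le> (1+\<epsilon>) * ((\<phi> n x)\<^sup>2 / (norm x)\<^sup>2) + (1 + 1/\<epsilon>) * ((\<phi> n x - u x)\<^sup>2 / (norm x)\<^sup>2)"
            using divide_right_mono[OF s, of "(norm x)\<^sup>2"] by (simp add: add_divide_distrib)
          also have "(\<phi> n x - u x)\<^sup>2 / (norm x)\<^sup>2 \<le> (\<phi> n x - u x)\<^sup>2 / \<delta>^2"
            using ep xd np by (intro divide_left_mono power_mono) auto
          finally have "(u x)\<^sup>2 / (norm x)\<^sup>2 \<le> (1+\<epsilon>) * ((\<phi> n x)\<^sup>2 / (norm x)\<^sup>2) + e1 * (\<phi> n x - u x)\<^sup>2"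
            using ep by (simp add: e1_def mult_left_mono)
          then have "ennreal ((u x)\<^sup>2 / (norm x)\<^sup>2) \<le> ennreal (1+\<epsilon>) * ennreal ((\<phi> n x)\<^sup>2 / (norm x)\<^sup>2) + ennreal e1 * ennreal ((\<phi> n x - u x)\<^sup>2)"
            using ep e1p by (intro ennreal_split) auto
          then show ?thesis using True xO by (simp add: E_def)
        qed simp
      qed
      also have "\<dots> = E * Bn n + ennreal e1 * Dn n"
        unfolding Bn_def Dn_def
        by (subst nn_integral_add) (auto simp: nn_integral_cmult)
      finally show ?thesis .
    qed
    have ii: "An n \<le> E * A + ennreal e2 * Cn n" for n
    proof -
      have "An n \<le> (\<integral>\<^sup>+ x. E * (ennreal ((norm (g x))\<^sup>2) * indicator \<Omega> x) + ennreal e2 * ennreal ((norm (Gn n x - g x))\<^sup>2) \<partial>lborel)"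
        unfolding An_def
      proof (intro nn_integral_mono)
        fix x
        show "ennreal ((norm (Gn n x))\<^sup>2) * indicator \<Omega> x
            \<le> E * (ennreal ((norm (g x))\<^sup>2) * indicator \<Omega> x) + ennreal e2 * ennreal ((norm (Gn n x - g x))\<^sup>2)"
        proof (cases "x \<in> \<Omega>")
          case True
          have "(norm (Gn n x))\<^sup>2 \<le> (1+\<epsilon>) * (norm (g x))\<^sup>2 + e2 * (norm (Gn n x - g x))\<^sup>2"
            unfolding e2_def by (rule sq_split[OF ep(1) norm_ge_zero norm_ge_zero norm_ge_zero norm_triangle_sub])
          then have "ennreal ((norm (Gn n x))\<^sup>2) \<le> ennreal (1+\<epsilon>) * ennreal ((norm (g x))\<^sup>2) + ennreal e2 * ennreal ((norm (Gn n x - g x))\<^sup>2)"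
            using ep e1p by (intro ennreal_split) auto
          then show ?thesis using True by (simp add: E_def)
        qed simp
      qed
      also have "\<dots> = E * A + ennreal e2 * Cn n"
        unfolding A_def Cn_def
        by (subst nn_integral_add) (auto simp: nn_integral_cmult)
      finally show ?thesis .
    qed
    have EE: "E * E = ennreal ((1 + 1/real (Suc j))^2)"
    proof -
      have "ennreal ((1+\<epsilon>)*(1+\<epsilon>)) = E * E" unfolding E_def using ep by (intro ennreal_mult) auto
      then show ?thesis by (simp add: \<epsilon>_def power2_eq_square)
    qed
    show "c * Bm m \<le> ennreal ((1 + 1/real (Suc j))^2) * A"
    proof (rule le_of_lim)
      fix n
      have "c * Bm m \<le> c * (E * Bn n + ennreal e1 * Dn n)" by (rule mult_left_mono[OF i]) simp
      also have "\<dots> = E * (c * Bn n) + c * ennreal e1 * Dn n" by (simp add: algebra_simps)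
      also have "\<dots> \<le> E * An n + c * ennreal e1 * Dn n" by (intro add_mono mult_left_mono T) auto
      also have "\<dots> \<le> E * (E * A + ennreal e2 * Cn n) + c * ennreal e1 * Dn n" by (intro add_mono mult_left_mono ii) auto
      also have "\<dots> = (E * E) * A + (E * ennreal e2 * Cn n + c * ennreal e1 * Dn n)" by (simp add: algebra_simps)
      finally show "c * Bm m \<le> ennreal ((1 + 1/real (Suc j))^2) * A + (E * ennreal e2 * Cn n + c * ennreal e1 * Dn n)"
        unfolding EE .
    next
      have "(\<lambda>n. E * ennreal e2 * Cn n + c * ennreal e1 * Dn n) \<longlonglongrightarrow> E * ennreal e2 * 0 + c * ennreal e1 * 0"
        using Lg Lu unfolding Cn_def Dn_def
        by (intro tendsto_add ennreal_tendsto_cmult) (auto simp: E_def c_def ennreal_mult_less_top)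
      then show "(\<lambda>n. E * ennreal e2 * Cn n + c * ennreal e1 * Dn n) \<longlonglongrightarrow> 0" by simp
    qed
  qed
  have B: "(\<integral>\<^sup>+ x \<in> \<Omega>. ennreal ((u x)\<^sup>2 / (norm x)\<^sup>2) \<partial>lborel) = (SUP m. Bm m)"
  proof -
    have "(\<integral>\<^sup>+ x \<in> \<Omega>. ennreal ((u x)\<^sup>2 / (norm x)\<^sup>2) \<partial>lborel)
       = (\<integral>\<^sup>+ x. (SUP m. ennreal ((u x)\<^sup>2 / (norm x)\<^sup>2) * indicator (\<Omega> \<inter> {x. 1 / real (Suc m) \<le> norm x}) x) \<partial>lborel)"
    proof (intro nn_integral_cong)
      fix x
      show "ennreal ((u x)\<^sup>2 / (norm x)\<^sup>2) * indicator \<Omega> x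
          = (SUP m. ennreal ((u x)\<^sup>2 / (norm x)\<^sup>2) * indicator (\<Omega> \<inter> {x. 1 / real (Suc m) \<le> norm x}) x)"
      proof (cases "x \<in> \<Omega>")
        case True
        then have "x \<noteq> 0" using Om_nz[OF assms(1-4)] \<Omega>_def by blast
        then obtain m0 where m0: "m0 > 0" "inverse (real m0) < norm x"
          using ex_inverse_of_nat_less[of "norm x"] by auto
        have "1 / real (Suc m0) \<le> norm x"
          using m0 by (smt (verit) frac_le inverse_eq_divide of_nat_0_less_iff of_nat_Suc of_nat_less_iff lessI)
        then have up: "ennreal ((u x)\<^sup>2 / (norm x)\<^sup>2) \<le> (SUP m. ennreal ((u x)\<^sup>2 / (norm x)\<^sup>2) * indicator (\<Omega> \<inter> {x. 1 / real (Suc m) \<le> norm x}) x)"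
          using True by (intro SUP_upper2[of m0]) auto
        have lo: "(SUP m. ennreal ((u x)\<^sup>2 / (norm x)\<^sup>2) * indicator (\<Omega> \<inter> {x. 1 / real (Suc m) \<le> norm x}) x) \<le> ennreal ((u x)\<^sup>2 / (norm x)\<^sup>2)"
          by (intro SUP_least) (auto simp: indicator_def)
        show ?thesis using up lo True by (simp add: antisym)
      qed simp
    qed
    also have "\<dots> = (SUP m. Bm m)"
      unfolding Bm_def
    proof (rule nn_integral_monotone_convergence_SUP)
      show "incseq (\<lambda>m x. ennreal ((u x)\<^sup>2 / (norm x)\<^sup>2) * indicator (\<Omega> \<inter> {x. 1 / real (Suc m) \<le> norm x}) x)"
      proof (intro incseq_SucI le_funI)
        fix m x
        have "1 / real (Suc (Suc m)) \<le> 1 / real (Suc m)" by (simp add: frac_le)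
        then show "ennreal ((u x)\<^sup>2 / (norm x)\<^sup>2) * indicator (\<Omega> \<inter> {x. 1 / real (Suc m) \<le> norm x}) x
            \<le> ennreal ((u x)\<^sup>2 / (norm x)\<^sup>2) * indicator (\<Omega> \<inter> {x. 1 / real (Suc (Suc m)) \<le> norm x}) x"
          by (auto simp: indicator_def)
      qed
    qed measurable
    finally show ?thesis .
  qed
  have "c * (SUP m. Bm m) \<le> A"
    unfolding SUP_mult_left_ennreal using main by (rule SUP_least)
  then show ?thesis unfolding B[unfolded \<Omega>_def] c_def A_def \<Omega>_def by simp
qed


end
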